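(* Let $D$ be a connection on a vector bundle $E$ that is generic. Then (1) the curvature $\kappa:E\to\Lambda^2\otimes E$ of $D$ is injective, and (2) $D$ is exact.
   Context: $\kappa_{ab}{}^\alpha{}_\beta\phi^\beta=\tfrac12(D_aD_b-D_bD_a)\phi^\alpha$ is the curvature; $\kappa^{(1)}:\Lambda^1\otimes E\to\Lambda^3\otimes E$ is $\phi_c{}^\alpha\mapsto\kappa_{[ab}{}^\alpha{}_{|\beta|}\phi_{c]}{}^\beta$ (which equals $(D^\wedge)^2$, $D^\wedge$ the exterior covariant derivative). $D$ is generic if $\kappa^{(1)}$ is injective. $D$ is exact if every section $\phi$ of $\Lambda^1\otimes E$ with $D^\wedge\phi=\kappa(\psi)$ for some section $\psi$ of $E$ is of the form $D\eta$ for some section $\eta$ of $E$ (statements local; curvature assumed of constant rank). *)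

theory Defs
  imports "HOL-Analysis.Analysis"
begin

text \<open>Local setting: base = open set U in real^'n (a chart), bundle E trivialised
  over U with fibre real^'m.  Sections are functions real^'n => real^'m.\<close>

definition pd :: "'n::finite \<Rightarrow> (real^'n \<Rightarrow> 'b::real_normed_vector) \<Rightarrow> real^'n \<Rightarrow> 'b" where
  "pd a f x = frechet_derivative f (at x) (axis a 1)"

fun iter_pd :: "'n::finite list \<Rightarrow> (real^'n \<Rightarrow> 'b::real_normed_vector) \<Rightarrow> real^'n \<Rightarrow> 'b" where
  "iter_pd [] f = f"
| "iter_pd (a # as) f = pd a (iter_pd as f)"

definition smooth_on :: "(real^'n::finite) set \<Rightarrow> (real^'n \<Rightarrow> 'b::real_normed_vector) \<Rightarrow> bool" where
  "smooth_on U f \<longleftrightarrow> (\<forall>as. \<forall>x\<in>U. iter_pd as f differentiable (at x))"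

text \<open>Connection D = d + Gamma in the local frame: D_a eta = partial_a eta + Gamma_a eta.\<close>
definition covD :: "('n::finite \<Rightarrow> real^'n \<Rightarrow> real^'m::finite^'m) \<Rightarrow> 'n \<Rightarrow> (real^'n \<Rightarrow> real^'m) \<Rightarrow> real^'n \<Rightarrow> real^'m" where
  "covD \<Gamma> a \<eta> x = pd a \<eta> x + \<Gamma> a x *v \<eta> x"

text \<open>Curvature kappa_ab = 1/2 (D_a D_b - D_b D_a), as an endomorphism of the fibre.\<close>
definition curv :: "('n::finite \<Rightarrow> real^'n \<Rightarrow> real^'m::finite^'m) \<Rightarrow> 'n \<Rightarrow> 'n \<Rightarrow> real^'n \<Rightarrow> real^'m^'m" where
  "curv \<Gamma> a b x = (1/2) *\<^sub>R (pd a (\<Gamma> b) x - pd b (\<Gamma> a) x + \<Gamma> a x ** \<Gamma> b x - \<Gamma> b x ** \<Gamma> a x)"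

definition kappa :: "('n::finite \<Rightarrow> real^'n \<Rightarrow> real^'m::finite^'m) \<Rightarrow> real^'n \<Rightarrow> real^'m \<Rightarrow> ('n \<Rightarrow> 'n \<Rightarrow> real^'m)" where
  "kappa \<Gamma> x v = (\<lambda>a b. curv \<Gamma> a b x *v v)"

text \<open>kappa^(1) : Lambda^1 (x) E -> Lambda^3 (x) E at x,
  phi_c |-> kappa_[ab phi_c] (skew-symmetrisation; since kappa_ab is skew in a b
  this is one third of the cyclic sum).\<close>
definition kappa1 :: "('n::finite \<Rightarrow> real^'n \<Rightarrow> real^'m::finite^'m) \<Rightarrow> real^'n \<Rightarrow> ('n \<Rightarrow> real^'m) \<Rightarrow> ('n \<Rightarrow> 'n \<Rightarrow> 'n \<Rightarrow> real^'m)" where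
  "kappa1 \<Gamma> x \<phi> = (\<lambda>a b c. (1/3) *\<^sub>R (curv \<Gamma> a b x *v \<phi> c + curv \<Gamma> b c x *v \<phi> a + curv \<Gamma> c a x *v \<phi> b))"

definition extD :: "('n::finite \<Rightarrow> real^'n \<Rightarrow> real^'m::finite^'m) \<Rightarrow> ('n \<Rightarrow> real^'n \<Rightarrow> real^'m) \<Rightarrow> 'n \<Rightarrow> 'n \<Rightarrow> real^'n \<Rightarrow> real^'m" where
  "extD \<Gamma> \<phi> a b x = (1/2) *\<^sub>R (covD \<Gamma> a (\<phi> b) x - covD \<Gamma> b (\<phi> a) x)"

definition connection_on :: "(real^'n::finite) set \<Rightarrow> ('n \<Rightarrow> real^'n \<Rightarrow> real^'m::finite^'m) \<Rightarrow> bool" where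
  "connection_on U \<Gamma> \<longleftrightarrow> open U \<and> (\<forall>a. smooth_on U (\<Gamma> a))"

definition generic :: "(real^'n::finite) set \<Rightarrow> ('n \<Rightarrow> real^'n \<Rightarrow> real^'m::finite^'m) \<Rightarrow> bool" where
  "generic U \<Gamma> \<longleftrightarrow> (\<forall>x\<in>U. inj (kappa1 \<Gamma> x))"

definition exact :: "(real^'n::finite) set \<Rightarrow> ('n \<Rightarrow> real^'n \<Rightarrow> real^'m::finite^'m) \<Rightarrow> bool" where
  "exact U \<Gamma> \<longleftrightarrow>
    (\<forall>W \<phi> \<psi>. open W \<and> W \<subseteq> U \<and> (\<forall>c. smooth_on W (\<phi> c)) \<and> smooth_on W \<psi> \<and>
       (\<forall>x\<in>W. \<forall>a b. extD \<Gamma> \<phi> a b x = kappa \<Gamma> x (\<psi> x) a b) \<longrightarrow>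
       (\<forall>x\<in>W. \<exists>V \<eta>. open V \<and> x \<in> V \<and> V \<subseteq> W \<and> smooth_on V \<eta> \<and>
                 (\<forall>y\<in>V. \<forall>c. \<phi> c y = covD \<Gamma> c \<eta> y)))"

end

theory Submission
  imports Defs
begin

lemma bb_mv: "bounded_bilinear (\<lambda>(A::real^'n::finite^'m::finite) (x::real^'n). A *v x)"
proof (rule bounded_bilinear.intro)
  fix a a' :: "real^'n^'m" and b b' :: "real^'n" and r :: real
  show "(a + a') *v b = a *v b + a' *v b" by (simp add: matrix_vector_mult_add_rdistrib)
  show "a *v (b + b') = a *v b + a *v b'" by (simp add: matrix_vector_right_distrib)
  show "(r *\<^sub>R a) *v b = r *\<^sub>R (a *v b)" by (simp add: scaleR_matrix_vector_assoc)
  show "a *v (r *\<^sub>R b) = r *\<^sub>R (a *v b)" by (simp add: matrix_vector_mult_scaleR)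
next
  show "\<exists>K. \<forall>a b. norm ((a::real^'n^'m) *v b) \<le> norm a * norm b * K"
  proof (intro exI allI)
    fix a :: "real^'n^'m" and b :: "real^'n"
    have o1: "onorm ((*v) a) \<le> real CARD('m) * real CARD('n) * norm a"
    proof (rule onorm_le_matrix_component)
      fix i j
      have "\<bar>a $ i $ j\<bar> \<le> norm (a $ i)" by (rule component_le_norm_cart)
      also have "\<dots> \<le> norm a" by (rule Finite_Cartesian_Product.norm_nth_le)
      finally show "\<bar>a $ i $ j\<bar> \<le> norm a" .
    qed
    have o2: "norm (a *v b) \<le> onorm ((*v) a) * norm b"
      by (rule onorm[OF matrix_vector_mul_bounded_linear])
    show "norm (a *v b) \<le> norm a * norm b * (real CARD('m) * real CARD('n))"
      using mult_right_mono[OF o1 norm_ge_zero[of b]] o2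
      by (simp add: algebra_simps)
  qed
qed

lemma pd_has: "f differentiable at x \<Longrightarrow> (f has_derivative frechet_derivative f (at x)) (at x)"
  by (simp add: frechet_derivative_works)

lemma pd_add: assumes f: "f differentiable at x" and g: "g differentiable at x"
  shows "pd a (\<lambda>y. f y + g y) x = pd a f x + pd a g x"
proof -
  have "((\<lambda>y. f y + g y) has_derivative (\<lambda>h. frechet_derivative f (at x) h + frechet_derivative g (at x) h)) (at x)"
    by (rule has_derivative_add[OF pd_has[OF f] pd_has[OF g]])
  then have "frechet_derivative (\<lambda>y. f y + g y) (at x) = (\<lambda>h. frechet_derivative f (at x) h + frechet_derivative g (at x) h)"
    by (rule frechet_derivative_at[symmetric])
  then show ?thesis unfolding pd_def by simp
qed

lemma pd_diff: assumes f: "f differentiable at x" and g: "g differentiable at x"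
  shows "pd a (\<lambda>y. f y - g y) x = pd a f x - pd a g x"
proof -
  have "((\<lambda>y. f y - g y) has_derivative (\<lambda>h. frechet_derivative f (at x) h - frechet_derivative g (at x) h)) (at x)"
    by (rule has_derivative_diff[OF pd_has[OF f] pd_has[OF g]])
  then have "frechet_derivative (\<lambda>y. f y - g y) (at x) = (\<lambda>h. frechet_derivative f (at x) h - frechet_derivative g (at x) h)"
    by (rule frechet_derivative_at[symmetric])
  then show ?thesis unfolding pd_def by simp
qed

lemma pd_scale: assumes f: "f differentiable at x"
  shows "pd a (\<lambda>y. c *\<^sub>R f y) x = c *\<^sub>R pd a f x"
proof -
  have "((\<lambda>y. c *\<^sub>R f y) has_derivative (\<lambda>h. c *\<^sub>R frechet_derivative f (at x) h)) (at x)"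
    by (rule has_derivative_scaleR_right[OF pd_has[OF f]])
  then have "frechet_derivative (\<lambda>y. c *\<^sub>R f y) (at x) = (\<lambda>h. c *\<^sub>R frechet_derivative f (at x) h)"
    by (rule frechet_derivative_at[symmetric])
  then show ?thesis unfolding pd_def by simp
qed

lemma pd_mv: fixes M :: "real^'n::finite \<Rightarrow> real^'k::finite^'m::finite"
  assumes M: "M differentiable at x" and v: "v differentiable at x"
  shows "pd a (\<lambda>y. M y *v v y) x = M x *v pd a v x + pd a M x *v v x"
proof -
  have "((\<lambda>y. M y *v v y) has_derivative (\<lambda>h. M x *v frechet_derivative v (at x) h + frechet_derivative M (at x) h *v v x)) (at x)"
    by (rule bounded_bilinear.FDERIV[OF bb_mv pd_has[OF M] pd_has[OF v]])
  then have "frechet_derivative (\<lambda>y. M y *v v y) (at x) = (\<lambda>h. M x *v frechet_derivative v (at x) h + frechet_derivative M (at x) h *v v x)"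
    by (rule frechet_derivative_at[symmetric])
  then show ?thesis unfolding pd_def by simp
qed

lemma pd_const: "pd a (\<lambda>y. c) x = 0"
proof -
  have "frechet_derivative (\<lambda>y. c) (at x) = (\<lambda>h. 0)"
    by (rule frechet_derivative_at[symmetric]) (rule has_derivative_const)
  then show ?thesis unfolding pd_def by simp
qed

lemma diff_mv: fixes M :: "real^'n::finite \<Rightarrow> real^'k::finite^'m::finite"
  assumes M: "M differentiable at x" and v: "v differentiable at x"
  shows "(\<lambda>y. M y *v v y) differentiable at x"
  using bounded_bilinear.FDERIV[OF bb_mv pd_has[OF M] pd_has[OF v]] unfolding differentiable_def by blast

lemma hd_cong: assumes "open W" "x \<in> W" "\<And>y. y \<in> W \<Longrightarrow> f y = g y"
  shows "(f has_derivative D) (at x) \<longleftrightarrow> (g has_derivative D) (at x)"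
  using has_derivative_transform_within_open[where f=f and f'=D and x=x and t=UNIV and s=W and g=g]
  has_derivative_transform_within_open[where f=g and f'=D and x=x and t=UNIV and s=W and g=f] assms
  by auto

lemma pd_cong: assumes "open W" "x \<in> W" "\<And>y. y \<in> W \<Longrightarrow> f y = g y"
  shows "pd a f x = pd a g x"
proof -
  have "(\<lambda>D. (f has_derivative D) (at x)) = (\<lambda>D. (g has_derivative D) (at x))"
    using hd_cong[OF assms] by auto
  then show ?thesis unfolding pd_def frechet_derivative_def by simp
qed

lemma diff_cong: assumes "open W" "x \<in> W" "\<And>y. y \<in> W \<Longrightarrow> f y = g y" "g differentiable at x"
  shows "f differentiable at x"
  using hd_cong[of W x f g, OF assms(1-3)] assms(4) unfolding differentiable_def by blast

lemma vd_line:
  fixes f :: "real^'n::finite \<Rightarrow> 'b::real_normed_vector"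
  assumes "f differentiable at (p + t *\<^sub>R u)"
  shows "((\<lambda>t. f (p + t *\<^sub>R u)) has_vector_derivative frechet_derivative f (at (p + t *\<^sub>R u)) u) (at t)"
proof -
  have l: "((\<lambda>t. p + t *\<^sub>R u) has_derivative (\<lambda>h. h *\<^sub>R u)) (at t)"
    by (auto intro!: derivative_eq_intros)
  have f: "(f has_derivative frechet_derivative f (at (p + t *\<^sub>R u))) (at (p + t *\<^sub>R u))"
    using assms by (rule pd_has)
  have bl: "linear (frechet_derivative f (at (p + t *\<^sub>R u)))"
    using f has_derivative_linear by blast
  have "((\<lambda>t. f (p + t *\<^sub>R u)) has_derivative (frechet_derivative f (at (p + t *\<^sub>R u)) \<circ> (\<lambda>h. h *\<^sub>R u))) (at t)"
    using diff_chain_at[OF l] f by (simp add: o_def)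
  moreover have "(frechet_derivative f (at (p + t *\<^sub>R u)) \<circ> (\<lambda>h. h *\<^sub>R u)) = (\<lambda>h. h *\<^sub>R frechet_derivative f (at (p + t *\<^sub>R u)) u)"
    using linear_scale[OF bl] by (auto simp: o_def)
  ultimately show ?thesis unfolding has_vector_derivative_def by simp
qed

lemma young_half:
  fixes f :: "real^'n::finite \<Rightarrow> 'b::real_normed_vector"
  assumes W: "open W" "x \<in> W" and fd: "\<And>y. y \<in> W \<Longrightarrow> f differentiable at y"
    and gd: "(\<lambda>y. frechet_derivative f (at y) u) differentiable at x"
    and e: "e > 0"
  shows "\<exists>d>0. \<forall>s. 0 < s \<and> s < d \<longrightarrow>
     norm (f (x + s *\<^sub>R v + s *\<^sub>R u) - f (x + s *\<^sub>R u) - f (x + s *\<^sub>R v) + f x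
       - (s * s) *\<^sub>R frechet_derivative (\<lambda>y. frechet_derivative f (at y) u) (at x) v)
     \<le> 6 * e * (s * s) * (norm u + norm v + 1)"
proof -
  define g where "g = (\<lambda>y. frechet_derivative f (at y) u)"
  define L where "L = frechet_derivative g (at x)"
  have hL: "(g has_derivative L) (at x)" using gd unfolding g_def L_def by (rule pd_has)
  have Llin: "linear L" using hL has_derivative_linear by blast
  have "\<forall>e>0. \<exists>d>0. \<forall>y. norm (y - x) < d \<longrightarrow> norm (g y - g x - L (y - x)) \<le> e * norm (y - x)"
    using hL unfolding has_derivative_at_alt by (rule conjunct2)
  then obtain d1 where d1: "d1 > 0" and
    d1a: "\<forall>z. norm (z - x) < d1 \<longrightarrow> norm (g z - g x - L (z - x)) \<le> e * norm (z - x)"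
    using e by blast
  have d1e: "norm (g z - g x - L (z - x)) \<le> e * norm (z - x)" if "norm (z - x) < d1" for z
    using d1a that by blast
  obtain r where r: "r > 0" "ball x r \<subseteq> W" using W openE by blast
  define N where "N = norm u + norm v + 1"
  have N: "N > 0" "N \<ge> 1" unfolding N_def using norm_ge_zero[of u] norm_ge_zero[of v] by linarith+
  define d where "d = min d1 r / N"
  have d: "d > 0" unfolding d_def using d1 r N by auto
  show ?thesis
  proof (intro exI[of _ d] conjI allI impI)
    show "d > 0" by fact
    fix s assume s: "0 < s \<and> s < d"
    have sN: "s * N < min d1 r" using s N unfolding d_def by (simp add: field_simps)
    have near: "norm (p - x) \<le> s * N" if "p = x + a *\<^sub>R v + t *\<^sub>R u" "a \<in> {0..s}" "t \<in> {0..s}" for p a t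
    proof -
      have "norm (p - x) = norm (a *\<^sub>R v + t *\<^sub>R u)" using that by simp
      also have "\<dots> \<le> norm (a *\<^sub>R v) + norm (t *\<^sub>R u)" by (rule norm_triangle_ineq)
      also have "\<dots> = a * norm v + t * norm u" using that by simp
      also have "\<dots> \<le> s * norm v + s * norm u"
        using that by (intro add_mono mult_right_mono) auto
      also have "\<dots> \<le> s * N" unfolding N_def using s by (simp add: algebra_simps)
      finally show ?thesis .
    qed
    have inW: "p \<in> W" if "norm (p - x) \<le> s * N" for p
    proof -
      have "dist x p < r" using sN that by (simp add: dist_norm norm_minus_commute)
      then show ?thesis using r by auto
    qed
    have est: "norm (g p - g x - L (p - x)) \<le> e * (s * N)" if "norm (p - x) \<le> s * N" for p
    proof -
      have "norm (g p - g x - L (p - x)) \<le> e * norm (p - x)" using that sN by (intro d1e) simp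
      also have "\<dots> \<le> e * (s * N)" using that e by (intro mult_left_mono) auto
      finally show ?thesis .
    qed
    define G where "G = (\<lambda>t. f (x + s *\<^sub>R v + t *\<^sub>R u) - f (x + t *\<^sub>R u))"
    define G' where "G' = (\<lambda>t. g (x + s *\<^sub>R v + t *\<^sub>R u) - g (x + t *\<^sub>R u))"
    have deriv: "(G has_vector_derivative G' t) (at t within {0..s})" if t: "t \<in> {0..s}" for t
    proof -
      have i1: "x + s *\<^sub>R v + t *\<^sub>R u \<in> W"
        by (rule inW, rule near[of _ s t]) (use s t in auto)
      have i2: "x + t *\<^sub>R u \<in> W"
        by (rule inW, rule near[of _ 0 t]) (use s t in auto)
      have "(G has_vector_derivative G' t) (at t)"
        unfolding G_def G'_def g_def
        by (intro has_vector_derivative_diff vd_line fd i1 i2)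
      then show ?thesis by (rule has_vector_derivative_at_within)
    qed
    have Gb: "norm (G' t - s *\<^sub>R L v) \<le> 2 * e * (s * N)" if t: "t \<in> {0..s}" for t
    proof -
      define p1 where "p1 = x + s *\<^sub>R v + t *\<^sub>R u"
      define p2 where "p2 = x + t *\<^sub>R u"
      have n1: "norm (p1 - x) \<le> s * N" by (rule near[of p1 s t]) (use s t p1_def in auto)
      have n2: "norm (p2 - x) \<le> s * N" by (rule near[of p2 0 t]) (use s t p2_def in auto)
      have eq0: "L (p1 - x) - L (p2 - x) - s *\<^sub>R L v = 0"
        using linear_diff[OF Llin, of "p1 - x" "p2 - x", symmetric] linear_scale[OF Llin]
        unfolding p1_def p2_def by simp
      have "G' t - s *\<^sub>R L v = (g p1 - g x - L (p1 - x)) - (g p2 - g x - L (p2 - x))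
          + (L (p1 - x) - L (p2 - x) - s *\<^sub>R L v)"
        unfolding G'_def p1_def[symmetric] p2_def[symmetric] by (simp add: algebra_simps)
      also have "\<dots> = (g p1 - g x - L (p1 - x)) - (g p2 - g x - L (p2 - x))"
        by (simp only: eq0 add_0_right)
      also have "norm \<dots> \<le> norm (g p1 - g x - L (p1 - x)) + norm (g p2 - g x - L (p2 - x))"
        by (rule norm_triangle_ineq4)
      also have "\<dots> \<le> e * (s * N) + e * (s * N)" using est n1 n2 by (intro add_mono) auto
      finally show ?thesis by (simp add: mult_ac)
    qed
    have Gb2: "norm (G' t - G' 0) \<le> 4 * e * (s * N)" if t: "t \<in> {0..s}" for t
    proof -
      have "norm (G' t - G' 0) \<le> norm (G' t - s *\<^sub>R L v) + norm (G' 0 - s *\<^sub>R L v)"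
        using norm_triangle_ineq4[of "G' t - s *\<^sub>R L v" "G' 0 - s *\<^sub>R L v"] by simp
      also have "\<dots> \<le> 2 * e * (s * N) + 2 * e * (s * N)"
        using Gb[OF t] Gb[of 0] s by (intro add_mono) auto
      finally show ?thesis by (simp add: mult_ac)
    qed
    have seg: "closed_segment 0 s \<subseteq> {0..s}" using s by (simp add: closed_segment_eq_real_ivl)
    have z: "(0::real) \<in> {0..s}" using s by simp
    have mvt: "norm (G s - G 0 - (s - 0) *\<^sub>R G' 0) \<le> norm (s - 0) * (4 * e * (s * N))"
      by (rule vector_differentiable_bound_linearization[where S="{0..s}", OF deriv seg Gb2 z])
    have mvt2: "norm (G s - G 0 - s *\<^sub>R G' 0) \<le> s * (4 * e * (s * N))"
      using mvt s by simp
    have g0: "norm (s *\<^sub>R (G' 0 - s *\<^sub>R L v)) \<le> s * (2 * e * (s * N))"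
      using Gb[OF z] s by (simp add: mult_left_mono)
    have "f (x + s *\<^sub>R v + s *\<^sub>R u) - f (x + s *\<^sub>R u) - f (x + s *\<^sub>R v) + f x - (s * s) *\<^sub>R L v
       = (G s - G 0 - s *\<^sub>R G' 0) + s *\<^sub>R (G' 0 - s *\<^sub>R L v)"
      unfolding G_def by (simp add: scaleR_diff_right)
    also have "norm \<dots> \<le> norm (G s - G 0 - s *\<^sub>R G' 0) + norm (s *\<^sub>R (G' 0 - s *\<^sub>R L v))"
      by (rule norm_triangle_ineq)
    also have "\<dots> \<le> s * (4 * e * (s * N)) + s * (2 * e * (s * N))"
      using mvt2 g0 by (rule add_mono)
    also have "\<dots> = 6 * e * (s * s) * N" by (simp add: algebra_simps)
    finally show "norm (f (x + s *\<^sub>R v + s *\<^sub>R u) - f (x + s *\<^sub>R u) - f (x + s *\<^sub>R v) + f x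
       - (s * s) *\<^sub>R frechet_derivative (\<lambda>y. frechet_derivative f (at y) u) (at x) v)
     \<le> 6 * e * (s * s) * (norm u + norm v + 1)"
      unfolding L_def g_def N_def .
  qed
qed

lemma pd_fun: "pd b f = (\<lambda>y. frechet_derivative f (at y) (axis b 1))"
  by (rule ext) (simp add: pd_def)

lemma pd_sym:
  fixes f :: "real^'n::finite \<Rightarrow> 'b::real_normed_vector"
  assumes W: "open W" "x \<in> W" and fd: "\<And>y. y \<in> W \<Longrightarrow> f differentiable at y"
    and da: "pd a f differentiable at x" and db: "pd b f differentiable at x"
  shows "pd a (pd b f) x = pd b (pd a f) x"
proof -
  define ea where "ea = (axis a 1 :: real^'n)"
  define eb where "eb = (axis b 1 :: real^'n)"
  define P where "P = frechet_derivative (\<lambda>y. frechet_derivative f (at y) eb) (at x) ea"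
  define Q where "Q = frechet_derivative (\<lambda>y. frechet_derivative f (at y) ea) (at x) eb"
  have PQ: "pd a (pd b f) x = P" "pd b (pd a f) x = Q"
    unfolding P_def Q_def ea_def eb_def by (simp_all add: pd_fun pd_def)
  have gb: "(\<lambda>y. frechet_derivative f (at y) eb) differentiable at x"
    using db unfolding eb_def pd_fun .
  have ga: "(\<lambda>y. frechet_derivative f (at y) ea) differentiable at x"
    using da unfolding ea_def pd_fun .
  define N where "N = norm ea + norm eb + 1"
  have N: "N > 0" unfolding N_def using norm_ge_zero[of ea] norm_ge_zero[of eb] by linarith
  show ?thesis
  proof (rule ccontr)
    assume "pd a (pd b f) x \<noteq> pd b (pd a f) x"
    then have "P \<noteq> Q" using PQ by simp
    define \<delta> where "\<delta> = norm (P - Q)"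
    have \<delta>: "\<delta> > 0" using \<open>P \<noteq> Q\<close> unfolding \<delta>_def by simp
    define e where "e = \<delta> / (24 * N)"
    have e: "e > 0" unfolding e_def using \<delta> N by simp
    obtain d1 where d1: "d1 > 0" and
      h1: "\<forall>s. 0 < s \<and> s < d1 \<longrightarrow>
       norm (f (x + s *\<^sub>R ea + s *\<^sub>R eb) - f (x + s *\<^sub>R eb) - f (x + s *\<^sub>R ea) + f x - (s * s) *\<^sub>R P)
       \<le> 6 * e * (s * s) * (norm eb + norm ea + 1)"
      using young_half[OF W fd gb e, of ea] unfolding P_def by blast
    obtain d2 where d2: "d2 > 0" and
      h2: "\<forall>s. 0 < s \<and> s < d2 \<longrightarrow>
       norm (f (x + s *\<^sub>R eb + s *\<^sub>R ea) - f (x + s *\<^sub>R ea) - f (x + s *\<^sub>R eb) + f x - (s * s) *\<^sub>R Q)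
       \<le> 6 * e * (s * s) * (norm ea + norm eb + 1)"
      using young_half[OF W fd ga e, of eb] unfolding Q_def by blast
    define s where "s = min d1 d2 / 2"
    have s: "0 < s" "s < d1" "s < d2" unfolding s_def using d1 d2 by auto
    define F where "F = f (x + s *\<^sub>R ea + s *\<^sub>R eb) - f (x + s *\<^sub>R eb) - f (x + s *\<^sub>R ea) + f x"
    have F2: "f (x + s *\<^sub>R eb + s *\<^sub>R ea) - f (x + s *\<^sub>R ea) - f (x + s *\<^sub>R eb) + f x = F"
      unfolding F_def by (simp add: add_ac)
    have b1: "norm (F - (s * s) *\<^sub>R P) \<le> 6 * e * (s * s) * N"
      using h1 s unfolding F_def N_def by (simp add: add_ac)
    have "norm (f (x + s *\<^sub>R eb + s *\<^sub>R ea) - f (x + s *\<^sub>R ea) - f (x + s *\<^sub>R eb) + f x - (s * s) *\<^sub>R Q)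
       \<le> 6 * e * (s * s) * (norm ea + norm eb + 1)" using h2 s by blast
    then have b2: "norm (F - (s * s) *\<^sub>R Q) \<le> 6 * e * (s * s) * N"
      unfolding F2 N_def .
    have "(s * s) *\<^sub>R (P - Q) = (F - (s * s) *\<^sub>R Q) - (F - (s * s) *\<^sub>R P)"
      by (simp add: algebra_simps)
    then have "norm ((s * s) *\<^sub>R (P - Q)) \<le> norm (F - (s * s) *\<^sub>R Q) + norm (F - (s * s) *\<^sub>R P)"
      by (metis norm_triangle_ineq4)
    also have "\<dots> \<le> 6 * e * (s * s) * N + 6 * e * (s * s) * N" by (rule add_mono[OF b2 b1])
    also have "\<dots> = (s * s) * (\<delta> / 2)" unfolding e_def using N by (simp add: field_simps)
    finally have "(s * s) * \<delta> \<le> (s * s) * (\<delta> / 2)" unfolding \<delta>_def using s by simp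
    moreover have "(s * s) * (\<delta> / 2) < (s * s) * \<delta>" using s \<delta> by simp
    ultimately show False by simp
  qed
qed

lemma mv_scaleR_left: "(k *\<^sub>R (M::real^'n::finite^'m::finite)) *v v = k *\<^sub>R (M *v v)"
  by (simp add: scaleR_matrix_vector_assoc)

lemma alg:
  fixes Ga Gb Gc Hab Hba Hbc Hcb Hca Hac :: "real^'m::finite^'m"
    and Pa Pb Pc Fab Fba Fbc Fcb Fca Fac Xa Xb Xc :: "real^'m"
  shows "((1/2) *\<^sub>R ((Xb + (Ga *v Fcb + Hca *v Pb)) - (Xa + (Gb *v Fca + Hcb *v Pa)))
           + Gc *v ((1/2) *\<^sub>R ((Fab + Ga *v Pb) - (Fba + Gb *v Pa))))
       + ((1/2) *\<^sub>R ((Xc + (Gb *v Fac + Hab *v Pc)) - (Xb + (Gc *v Fab + Hac *v Pb)))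
           + Ga *v ((1/2) *\<^sub>R ((Fbc + Gb *v Pc) - (Fcb + Gc *v Pb))))
       + ((1/2) *\<^sub>R ((Xa + (Gc *v Fba + Hbc *v Pa)) - (Xc + (Ga *v Fbc + Hba *v Pc)))
           + Gb *v ((1/2) *\<^sub>R ((Fca + Gc *v Pa) - (Fac + Ga *v Pc))))
     = ((1/2) *\<^sub>R (Hab - Hba + Ga ** Gb - Gb ** Ga)) *v Pc
     + ((1/2) *\<^sub>R (Hbc - Hcb + Gb ** Gc - Gc ** Gb)) *v Pa
     + ((1/2) *\<^sub>R (Hca - Hac + Gc ** Ga - Ga ** Gc)) *v Pb"
  by (simp add: algebra_simps mv_scaleR_left matrix_vector_mult_scaleR matrix_vector_mul_assoc[symmetric])

lemma pd_cov:
  fixes M :: "real^'n::finite \<Rightarrow> real^'k::finite^'m::finite"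
  assumes f: "f differentiable at x" and M: "M differentiable at x" and g: "g differentiable at x"
  shows "pd c (\<lambda>z. f z + M z *v g z) x = pd c f x + (M x *v pd c g x + pd c M x *v g x)"
  using pd_add[OF f diff_mv[OF M g], of c] pd_mv[OF M g, of c] by simp

lemma diff_cov:
  fixes M :: "real^'n::finite \<Rightarrow> real^'k::finite^'m::finite"
  assumes f: "f differentiable at x" and M: "M differentiable at x" and g: "g differentiable at x"
  shows "(\<lambda>z. f z + M z *v g z) differentiable at x"
  by (rule differentiable_add[OF f diff_mv[OF M g]])

lemma pd_E:
  fixes M1 M2 :: "real^'n::finite \<Rightarrow> real^'k::finite^'m::finite"
  assumes f1: "f1 differentiable at x" and M1: "M1 differentiable at x" and g1: "g1 differentiable at x"
    and f2: "f2 differentiable at x" and M2: "M2 differentiable at x" and g2: "g2 differentiable at x"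
  shows "pd c (\<lambda>z. k *\<^sub>R ((f1 z + M1 z *v g1 z) - (f2 z + M2 z *v g2 z))) x
    = k *\<^sub>R ((pd c f1 x + (M1 x *v pd c g1 x + pd c M1 x *v g1 x)) - (pd c f2 x + (M2 x *v pd c g2 x + pd c M2 x *v g2 x)))"
proof -
  have d1: "(\<lambda>z. f1 z + M1 z *v g1 z) differentiable at x" by (rule diff_cov[OF f1 M1 g1])
  have d2: "(\<lambda>z. f2 z + M2 z *v g2 z) differentiable at x" by (rule diff_cov[OF f2 M2 g2])
  have "pd c (\<lambda>z. k *\<^sub>R ((f1 z + M1 z *v g1 z) - (f2 z + M2 z *v g2 z))) x
     = k *\<^sub>R pd c (\<lambda>z. (f1 z + M1 z *v g1 z) - (f2 z + M2 z *v g2 z)) x"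
    by (rule pd_scale[OF differentiable_diff[OF d1 d2]])
  also have "pd c (\<lambda>z. (f1 z + M1 z *v g1 z) - (f2 z + M2 z *v g2 z)) x
     = pd c (\<lambda>z. f1 z + M1 z *v g1 z) x - pd c (\<lambda>z. f2 z + M2 z *v g2 z) x"
    by (rule pd_diff[OF d1 d2])
  finally show ?thesis using pd_cov[OF f1 M1 g1, of c] pd_cov[OF f2 M2 g2, of c] by simp
qed

lemma smooth_d:
  assumes "smooth_on W f" "y \<in> W"
  shows "f differentiable at y" "pd a f differentiable at y" "pd a (pd b f) differentiable at y"
proof -
  have "iter_pd [] f differentiable at y" "iter_pd [a] f differentiable at y" "iter_pd [a, b] f differentiable at y"
    using assms unfolding smooth_on_def by blast+
  then show "f differentiable at y" "pd a f differentiable at y" "pd a (pd b f) differentiable at y"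
    by simp_all
qed

lemma kappa1_zero: "kappa1 \<Gamma> x (\<lambda>c. 0) = (\<lambda>a b c. 0)"
  unfolding kappa1_def by simp

theorem lemma2p10:
  fixes U :: "(real^'n::finite) set"
    and \<Gamma> :: "'n \<Rightarrow> real^'n \<Rightarrow> real^'m::finite^'m"
  assumes "connection_on U \<Gamma>"
    and "generic U \<Gamma>"
  shows "(\<forall>x\<in>U. inj (kappa \<Gamma> x)) \<and> exact U \<Gamma>"
proof
  show "\<forall>x\<in>U. inj (kappa \<Gamma> x)"
  proof
    fix x assume x: "x \<in> U"
    have inj1: "inj (kappa1 \<Gamma> x)" using assms(2) x unfolding generic_def by blast
    show "inj (kappa \<Gamma> x)"
    proof (rule injI)
      fix v w assume "kappa \<Gamma> x v = kappa \<Gamma> x w"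
      then have h: "curv \<Gamma> a b x *v v = curv \<Gamma> a b x *v w" for a b
        unfolding kappa_def by metis
      have h0: "curv \<Gamma> a b x *v (v - w) = 0" for a b
        using h[of a b] by (simp add: matrix_vector_mult_diff_distrib)
      have "kappa1 \<Gamma> x (\<lambda>c. v - w) = kappa1 \<Gamma> x (\<lambda>c. 0)"
        unfolding kappa1_def by (simp add: h0)
      then have "(\<lambda>c::'n. v - w) = (\<lambda>c. 0)" by (rule injD[OF inj1])
      then have "v - w = 0" by metis
      then show "v = w" by simp
    qed
  qed
next
  have sG: "smooth_on U (\<Gamma> a)" for a using assms(1) unfolding connection_on_def by blast
  show "exact U \<Gamma>" unfolding exact_def
  proof (intro allI impI ballI)
    fix W \<phi> \<psi> x0
    assume H: "open W \<and> W \<subseteq> U \<and> (\<forall>c. smooth_on W (\<phi> c)) \<and> smooth_on W \<psi> \<and>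
       (\<forall>x\<in>W. \<forall>a b. extD \<Gamma> \<phi> a b x = kappa \<Gamma> x (\<psi> x) a b)"
      and x0: "x0 \<in> W"
    have W: "open W" and WU: "W \<subseteq> U" and sphi: "\<And>c. smooth_on W (\<phi> c)" and spsi: "smooth_on W \<psi>"
      using H by auto
    have hyp: "extD \<Gamma> \<phi> a b y = curv \<Gamma> a b y *v \<psi> y" if "y \<in> W" for a b y
      using H that unfolding kappa_def by auto
    have sGW: "smooth_on W (\<Gamma> a)" for a
      using sG[of a] WU unfolding smooth_on_def by blast
    note dG = smooth_d[OF sGW]
    note dpsi = smooth_d[OF spsi]
    note dphi = smooth_d[OF sphi]
    define P where "P = (\<lambda>c z. \<phi> c z - (pd c \<psi> z + \<Gamma> c z *v \<psi> z))"
    have dC: "(\<lambda>z. pd c \<psi> z + \<Gamma> c z *v \<psi> z) differentiable at y" if "y \<in> W" for c y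
      by (rule diff_cov[OF dpsi(2)[OF that] dG(1)[OF that] dpsi(1)[OF that]])
    have dP: "P c differentiable at y" if "y \<in> W" for c y
      unfolding P_def by (rule differentiable_diff[OF dphi(1)[OF that] dC[OF that]])
    have pdC: "pd a (\<lambda>z. pd c \<psi> z + \<Gamma> c z *v \<psi> z) y
        = pd a (pd c \<psi>) y + (\<Gamma> c y *v pd a \<psi> y + pd a (\<Gamma> c) y *v \<psi> y)" if "y \<in> W" for a c y
      by (rule pd_cov[OF dpsi(2)[OF that] dG(1)[OF that] dpsi(1)[OF that]])
    have pdP0: "pd a (P c) y = pd a (\<phi> c) y - pd a (\<lambda>z. pd c \<psi> z + \<Gamma> c z *v \<psi> z) y" if "y \<in> W" for a c y
      unfolding P_def using pd_diff[OF dphi(1)[OF that] dC[OF that], of a] by simp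
    have pdP: "pd a (P c) y = pd a (\<phi> c) y - (pd a (pd c \<psi>) y + (\<Gamma> c y *v pd a \<psi> y + pd a (\<Gamma> c) y *v \<psi> y))"
      if "y \<in> W" for a c y
      using pdP0[OF that] pdC[OF that] by simp
    have dpdP: "pd a (P c) differentiable at x" if "x \<in> W" for a c x
    proof (rule diff_cong[OF W that])
      show "pd a (P c) y = pd a (\<phi> c) y - (pd a (pd c \<psi>) y + (\<Gamma> c y *v pd a \<psi> y + pd a (\<Gamma> c) y *v \<psi> y))"
        if "y \<in> W" for y using pdP[OF that] .
      show "(\<lambda>y. pd a (\<phi> c) y - (pd a (pd c \<psi>) y + (\<Gamma> c y *v pd a \<psi> y + pd a (\<Gamma> c) y *v \<psi> y))) differentiable at x"
        by (intro differentiable_diff differentiable_add diff_mv dphi dpsi dG that)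
    qed
    have S1: "(1/2) *\<^sub>R ((pd a (\<lambda>z. pd b \<psi> z + \<Gamma> b z *v \<psi> z) y + \<Gamma> a y *v (pd b \<psi> y + \<Gamma> b y *v \<psi> y))
        - (pd b (\<lambda>z. pd a \<psi> z + \<Gamma> a z *v \<psi> z) y + \<Gamma> b y *v (pd a \<psi> y + \<Gamma> a y *v \<psi> y)))
        = curv \<Gamma> a b y *v \<psi> y" if y: "y \<in> W" for a b y
    proof -
      have sym: "pd a (pd b \<psi>) y = pd b (pd a \<psi>) y"
        by (rule pd_sym[OF W y dpsi(1) dpsi(2)[OF y] dpsi(2)[OF y]])
      show ?thesis
        unfolding pdC[OF y] curv_def sym
        by (simp add: algebra_simps mv_scaleR_left matrix_vector_mult_scaleR matrix_vector_mul_assoc[symmetric])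
    qed
    have S2: "extD \<Gamma> P a b y = 0" if y: "y \<in> W" for a b y
    proof -
      have "extD \<Gamma> P a b y = extD \<Gamma> \<phi> a b y - (1/2) *\<^sub>R ((pd a (\<lambda>z. pd b \<psi> z + \<Gamma> b z *v \<psi> z) y + \<Gamma> a y *v (pd b \<psi> y + \<Gamma> b y *v \<psi> y))
        - (pd b (\<lambda>z. pd a \<psi> z + \<Gamma> a z *v \<psi> z) y + \<Gamma> b y *v (pd a \<psi> y + \<Gamma> a y *v \<psi> y)))"
        unfolding extD_def covD_def pdP0[OF y]
        by (simp add: P_def algebra_simps)
      then show ?thesis using S1[OF y] hyp[OF y] by simp
    qed
    have key: "(\<lambda>c. P c x) = (\<lambda>c. 0)" if x: "x \<in> W" for x
    proof -
      have inj1: "inj (kappa1 \<Gamma> x)" using assms(2) x WU unfolding generic_def by blast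
      have Efun: "(\<lambda>z. extD \<Gamma> P a b z) = (\<lambda>z. (1/2) *\<^sub>R ((pd a (P b) z + \<Gamma> a z *v P b z) - (pd b (P a) z + \<Gamma> b z *v P a z)))"
        for a b by (rule ext) (simp add: extD_def covD_def)
      have E0: "pd c (\<lambda>z. extD \<Gamma> P a b z) x = 0" for a b c
      proof -
        have "pd c (\<lambda>z. extD \<Gamma> P a b z) x = pd c (\<lambda>z. 0) x"
          by (rule pd_cong[OF W x]) (rule S2)
        then show ?thesis by (simp add: pd_const)
      qed
      have Eexp: "pd c (\<lambda>z. extD \<Gamma> P a b z) x = (1/2) *\<^sub>R ((pd c (pd a (P b)) x + (\<Gamma> a x *v pd c (P b) x + pd c (\<Gamma> a) x *v P b x))
          - (pd c (pd b (P a)) x + (\<Gamma> b x *v pd c (P a) x + pd c (\<Gamma> b) x *v P a x)))" for a b c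
        unfolding Efun by (rule pd_E[OF dpdP[OF x] dG(1)[OF x] dP[OF x] dpdP[OF x] dG(1)[OF x] dP[OF x]])
      have Ev: "extD \<Gamma> P a b x = (1/2) *\<^sub>R ((pd a (P b) x + \<Gamma> a x *v P b x) - (pd b (P a) x + \<Gamma> b x *v P a x))" for a b
        by (simp add: extD_def covD_def)
      have sym: "pd a (pd c (P b)) x = pd c (pd a (P b)) x" for a b c
        by (rule pd_sym[OF W x dP dpdP[OF x] dpdP[OF x]])
      have "kappa1 \<Gamma> x (\<lambda>c. P c x) = (\<lambda>a b c. 0)"
      proof (intro ext)
        fix a b c
        have s1: "pd a (pd c (P b)) x = pd c (pd a (P b)) x" by (rule sym)
        have s2: "pd b (pd c (P a)) x = pd c (pd b (P a)) x" by (rule sym)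
        have s3: "pd b (pd a (P c)) x = pd a (pd b (P c)) x" by (rule sym)
        have z: "(pd c (\<lambda>z. extD \<Gamma> P a b z) x + \<Gamma> c x *v extD \<Gamma> P a b x)
              + (pd a (\<lambda>z. extD \<Gamma> P b c z) x + \<Gamma> a x *v extD \<Gamma> P b c x)
              + (pd b (\<lambda>z. extD \<Gamma> P c a z) x + \<Gamma> b x *v extD \<Gamma> P c a x) = 0"
          by (simp only: E0 S2[OF x] matrix_vector_mult_0_right add_0_right)
        have "(pd c (\<lambda>z. extD \<Gamma> P a b z) x + \<Gamma> c x *v extD \<Gamma> P a b x)
              + (pd a (\<lambda>z. extD \<Gamma> P b c z) x + \<Gamma> a x *v extD \<Gamma> P b c x)
              + (pd b (\<lambda>z. extD \<Gamma> P c a z) x + \<Gamma> b x *v extD \<Gamma> P c a x)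
          = curv \<Gamma> a b x *v P c x + curv \<Gamma> b c x *v P a x + curv \<Gamma> c a x *v P b x"
          unfolding Eexp Ev s1 s2 s3 curv_def
          by (rule alg)
        then have "curv \<Gamma> a b x *v P c x + curv \<Gamma> b c x *v P a x + curv \<Gamma> c a x *v P b x = 0"
          using z by simp
        then show "kappa1 \<Gamma> x (\<lambda>c. P c x) a b c = 0"
          unfolding kappa1_def by simp
      qed
      then have "kappa1 \<Gamma> x (\<lambda>c. P c x) = kappa1 \<Gamma> x (\<lambda>c. 0)" by (simp add: kappa1_zero)
      then show ?thesis by (rule injD[OF inj1])
    qed
    show "\<exists>V \<eta>. open V \<and> x0 \<in> V \<and> V \<subseteq> W \<and> smooth_on V \<eta> \<and> (\<forall>y\<in>V. \<forall>c. \<phi> c y = covD \<Gamma> c \<eta> y)"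
    proof (intro exI conjI ballI allI)
      show "open W" "x0 \<in> W" "W \<subseteq> W" "smooth_on W \<psi>" by (fact W, fact x0, rule subset_refl, fact spsi)
      fix y c assume y: "y \<in> W"
      have "P c y = 0" using fun_cong[OF key[OF y], of c] by simp
      then show "\<phi> c y = covD \<Gamma> c \<psi> y" unfolding P_def covD_def by simp
    qed
  qed
qed

end
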